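(* Let $P,Q\in\Gamma_n$ and $0<r\le R$ with $r\le p_i/q_i\le R$ for all $i$. Let $s,t\in\mathbb{R}$ with $0\le s\le4$ and $t\ge-1$. Then $$\frac{1}{R^{s+1}}\Big(\frac{R+1}{2}\Big)^{s-t-1}\big[(4-s)R+s\big]\Omega_t(Q\|P)\le\zeta_s(Q\|P)\le\frac{1}{r^{s+1}}\Big(\frac{r+1}{2}\Big)^{s-t-1}\big[(4-s)R+s\big]\Omega_t(Q\|P).$$
   Context: $\Gamma_n=\{P=(p_1,\dots,p_n): p_i>0,\ \sum_i p_i=1\}$, $n\ge2$. For $P,Q\in\Gamma_n$ and $s\in\mathbb{R}$: $\Omega_s(Q\|P)=[s(s-1)]^{-1}\big[\sum_i q_i\big(\frac{p_i+q_i}{2q_i}\big)^s-1\big]$ for $s\ne0,1$; $\Omega_0(Q\|P)=\sum_i q_i\ln\frac{2q_i}{p_i+q_i}$; $\Omega_1(Q\|P)=\sum_i\frac{p_i+q_i}{2}\ln\frac{p_i+q_i}{2q_i}$. $\zeta_s(Q\|P)=(s-1)^{-1}\sum_i(q_i-p_i)\big(\frac{p_i+q_i}{2p_i}\big)^{s-1}$ for $s\ne1$; $\zeta_1(Q\|P)=\sum_i(q_i-p_i)\ln\frac{p_i+q_i}{2p_i}$. *)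

theory Defs
  imports Complex_Main
begin

definition Gamma :: "nat \<Rightarrow> (nat \<Rightarrow> real) set" where
  "Gamma n = {p. (\<forall>i<n. p i > 0) \<and> (\<Sum>i<n. p i) = 1}"

definition Omega :: "real \<Rightarrow> nat \<Rightarrow> (nat \<Rightarrow> real) \<Rightarrow> (nat \<Rightarrow> real) \<Rightarrow> real" where
  "Omega s n q p =
    (if s = 0 then (\<Sum>i<n. q i * ln (2 * q i / (p i + q i)))
     else if s = 1 then (\<Sum>i<n. (p i + q i) / 2 * ln ((p i + q i) / (2 * q i)))
     else ((\<Sum>i<n. q i * ((p i + q i) / (2 * q i)) powr s) - 1) / (s * (s - 1)))"

definition zeta :: "real \<Rightarrow> nat \<Rightarrow> (nat \<Rightarrow> real) \<Rightarrow> (nat \<Rightarrow> real) \<Rightarrow> real" where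
  "zeta s n q p =
    (if s = 1 then (\<Sum>i<n. (q i - p i) * ln ((p i + q i) / (2 * p i)))
     else (\<Sum>i<n. (q i - p i) * ((p i + q i) / (2 * p i)) powr (s - 1)) / (s - 1))"

end

theory Submission imports Defs "HOL-Analysis.Convex" begin

lemma dy: "(x::real) > -1 \<Longrightarrow> DERIV (\<lambda>x. ((x+1)/2) powr c) x :> c * ((x+1)/2) powr (c-1) / 2"
proof -
  assume x: "x > -1"
  have "DERIV (\<lambda>x. (x+1)/2) x :> 1/2" by (auto intro!: derivative_eq_intros)
  from DERIV_chain2[OF has_real_derivative_powr this] x show ?thesis by simp
qed

lemma du: "(x::real) > 0 \<Longrightarrow> DERIV (\<lambda>x. ((x+1)/(2*x)) powr c) x :> c * ((x+1)/(2*x)) powr (c-1) * (-1/(2*x^2))"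
proof -
  assume x: "x > 0"
  have "DERIV (\<lambda>x. (x+1)/(2*x)) x :> -1/(2*x^2)" using x
    by (auto intro!: derivative_eq_intros simp: field_simps power2_eq_square)
  from DERIV_chain2[OF has_real_derivative_powr this] x show ?thesis by auto
qed

definition FF :: "real \<Rightarrow> real \<Rightarrow> real" where
  "FF t x = (if t = 0 then - ln ((x+1)/2) else if t = 1 then (x+1)/2 * ln ((x+1)/2)
            else (((x+1)/2) powr t - 1) / (t*(t-1)))"
definition F1 :: "real \<Rightarrow> real \<Rightarrow> real" where
  "F1 t x = (if t = 1 then (ln ((x+1)/2) + 1)/2 else ((x+1)/2) powr (t-1) / (2*(t-1)))"
definition F2 :: "real \<Rightarrow> real \<Rightarrow> real" where
  "F2 t x = ((x+1)/2) powr (t-2) / 4"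
definition GG :: "real \<Rightarrow> real \<Rightarrow> real" where
  "GG s x = (if s = 1 then (1-x) * ln ((x+1)/(2*x)) else (1-x) * ((x+1)/(2*x)) powr (s-1) / (s-1))"
definition G1 :: "real \<Rightarrow> real \<Rightarrow> real" where
  "G1 s x = (if s = 1 then - ln ((x+1)/(2*x)) else - (((x+1)/(2*x)) powr (s-1)) / (s-1))
            - (1-x) * ((x+1)/(2*x)) powr (s-2) / (2*x^2)"
definition G2 :: "real \<Rightarrow> real \<Rightarrow> real" where
  "G2 s x = ((x+1)/(2*x)) powr (s-3) * ((4-s)*x+s) / (4*x^4)"

lemma FF_deriv: assumes x: "(x::real) > 0" shows "DERIV (FF t) x :> F1 t x"
proof -
  have y: "(x+1)/2 > 0" using x by simp
  consider "t = 0" | "t = 1" | "t \<noteq> 0" "t \<noteq> 1" by blast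
  then show ?thesis
  proof cases
    case 1
    have e: "FF t = (\<lambda>x. - ln ((x+1)/2))" using 1 by (auto simp: FF_def)
    show ?thesis unfolding e using 1 y
      by (auto intro!: derivative_eq_intros simp: F1_def powr_minus field_simps)
  next
    case 2
    have e: "FF t = (\<lambda>x. (x+1)/2 * ln ((x+1)/2))" using 2 by (auto simp: FF_def)
    show ?thesis unfolding e using 2 y
      by (auto intro!: derivative_eq_intros simp: F1_def field_simps)
  next
    case 3
    have e: "FF t = (\<lambda>x. (((x+1)/2) powr t - 1) / (t*(t-1)))" using 3 by (auto simp: FF_def)
    have "t - 1 \<noteq> 0" using 3 by simp
    show ?thesis unfolding e using 3 y \<open>t - 1 \<noteq> 0\<close>
      by (auto intro!: derivative_eq_intros dy simp: F1_def)
  qed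
qed

lemma F1_deriv: assumes x: "(x::real) > 0" shows "DERIV (F1 t) x :> F2 t x"
proof -
  have y: "(x+1)/2 > 0" using x by simp
  show ?thesis
  proof cases
    assume 2: "t = 1"
    have e: "F1 t = (\<lambda>x. (ln ((x+1)/2) + 1)/2)" using 2 by (auto simp: F1_def)
    show ?thesis unfolding e using 2 y
      by (auto intro!: derivative_eq_intros simp: F2_def powr_minus field_simps)
  next
    assume 3: "t \<noteq> 1"
    have e: "F1 t = (\<lambda>x. ((x+1)/2) powr (t-1) / (2*(t-1)))" using 3 by (auto simp: F1_def)
    have "t - 1 \<noteq> 0" using 3 by simp
    show ?thesis unfolding e using 3 y \<open>t - 1 \<noteq> 0\<close>
      by (auto intro!: derivative_eq_intros dy simp: F2_def) (simp add: field_simps)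
  qed
qed

lemma GG_deriv: assumes x: "(x::real) > 0" shows "DERIV (GG s) x :> G1 s x"
proof -
  have u: "(x+1)/(2*x) > 0" using x by simp
  show ?thesis
  proof cases
    assume 2: "s = 1"
    have e: "GG s = (\<lambda>x. (1-x) * ln ((x+1)/(2*x)))" using 2 by (auto simp: GG_def)
    show ?thesis unfolding e using 2 u x
      by (auto intro!: derivative_eq_intros simp: G1_def powr_minus field_simps) (simp add: divide_simps power2_eq_square; algebra)
  next
    assume 3: "s \<noteq> 1"
    have e: "GG s = (\<lambda>x. (1-x) * ((x+1)/(2*x)) powr (s-1) / (s-1))" using 3 by (auto simp: GG_def)
    have "s - 1 \<noteq> 0" using 3 by simp
    show ?thesis unfolding e using 3 u x \<open>s - 1 \<noteq> 0\<close>
      by (auto intro!: derivative_eq_intros du simp: G1_def) (simp add: field_simps power2_eq_square)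
  qed
qed

lemma G1_part: assumes x: "(x::real) > 0"
  shows "DERIV (\<lambda>x. (1-x) * ((x+1)/(2*x)) powr c / (2*x^2)) x :>
     (x-2)/(2*x^3) * ((x+1)/(2*x)) powr c + (c * ((x+1)/(2*x)) powr (c-1) * (-1/(2*x^2))) * ((1-x)/(2*x^2))"
proof -
  have d2: "DERIV (\<lambda>x. (1-x)/(2*x^2)) x :> (x-2)/(2*x^3)" using x
    by (auto intro!: derivative_eq_intros simp: field_simps power2_eq_square power3_eq_cube)
  have e: "(\<lambda>x. (1-x) * ((x+1)/(2*x)) powr c / (2*x^2)) = (\<lambda>x. (1-x)/(2*x^2) * ((x+1)/(2*x)) powr c)"
    by (rule ext) simp
  show ?thesis unfolding e by (rule DERIV_mult[OF d2 du[OF x]])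
qed

lemma rat1: fixes x d :: real assumes "x \<noteq> 0" "d \<noteq> 0" "d = x + 1"
  shows "1/(x*d) - ((x-2)/(2*x^3) * (2*x/d) + ((1-2) * (4*x^2/d^2) * (-1/(2*x^2))) * ((1-x)/(2*x^2)))
     = (4*x^2/d^2) * ((4-1)*x+1)/(4*x^4)"
proof -
  show ?thesis using assms(1,2)
    apply (simp add: field_simps power2_eq_square power3_eq_cube)
    using assms(3) by algebra
qed

lemma G1_deriv: assumes x: "(x::real) > 0" shows "DERIV (G1 s) x :> G2 s x"
proof -
  have u: "(x+1)/(2*x) > 0" using x by simp
  define a where "a = ((x+1)/(2*x)) powr (s-3)"
  have pw: "((x+1)/(2*x)) powr (s-2) = a * ((x+1)/(2*x))"
  proof -
    have "((x+1)/(2*x)) powr (s-2) = ((x+1)/(2*x)) powr ((s-3)+1)" by simp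
    also have "\<dots> = ((x+1)/(2*x)) powr (s-3) * ((x+1)/(2*x)) powr 1" by (rule powr_add)
    also have "\<dots> = a * ((x+1)/(2*x))" using u x by (simp add: a_def)
    finally show ?thesis .
  qed
  have P: "DERIV (\<lambda>x. (1-x) * ((x+1)/(2*x)) powr (s-2) / (2*x^2)) x :>
     (x-2)/(2*x^3) * (a * ((x+1)/(2*x))) + ((s-2) * a * (-1/(2*x^2))) * ((1-x)/(2*x^2))"
    using G1_part[OF x, of "s-2"] by (simp add: pw a_def)
  have G2e: "G2 s x = a * ((4-s)*x+s) / (4*x^4)" by (simp add: G2_def a_def)
  show ?thesis
  proof cases
    assume 2: "s = 1"
    have e: "G1 s = (\<lambda>x. - ln ((x+1)/(2*x)) - (1-x) * ((x+1)/(2*x)) powr (s-2) / (2*x^2))" using 2 by (auto simp: G1_def)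
    have L: "DERIV (\<lambda>x. - ln ((x+1)/(2*x))) x :> 1/(x*(x+1))" using x
      by (auto intro!: derivative_eq_intros simp: field_simps power2_eq_square)
    have a1: "a * ((x+1)/(2*x)) = 2*x/(x+1)" using pw 2 u x by (simp add: powr_minus)
    have "DERIV (G1 s) x :> 1/(x*(x+1)) - ((x-2)/(2*x^3) * (a * ((x+1)/(2*x))) + ((s-2) * a * (-1/(2*x^2))) * ((1-x)/(2*x^2)))"
      unfolding e by (rule DERIV_diff[OF L P])
    moreover have "1/(x*(x+1)) - ((x-2)/(2*x^3) * (a * ((x+1)/(2*x))) + ((s-2) * a * (-1/(2*x^2))) * ((1-x)/(2*x^2))) = G2 s x"
      proof -
      have h: "a*(x+1)^2 = 4*x^2" using a1 x by (simp add: field_simps power2_eq_square)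
      have "(x+1)^2 \<noteq> 0" using x by simp
      then have aval: "a = 4*x^2/(x+1)^2" using h by (simp add: eq_divide_eq)
      have nz: "x \<noteq> 0" "x + 1 \<noteq> 0" using x by auto
      show ?thesis unfolding G2e a1 unfolding aval 2 by (rule rat1) (use nz in auto)
    qed
    ultimately show ?thesis by simp
  next
    assume 3: "s \<noteq> 1"
    have e: "G1 s = (\<lambda>x. - (((x+1)/(2*x)) powr (s-1)) / (s-1) - (1-x) * ((x+1)/(2*x)) powr (s-2) / (2*x^2))" using 3 by (auto simp: G1_def)
    have "s - 1 \<noteq> 0" using 3 by simp
    have ss: "s - 1 - 1 = s - 2" by simp
    have D1: "DERIV (\<lambda>x. ((x+1)/(2*x)) powr (s-1)) x :> (s-1) * ((x+1)/(2*x)) powr (s-2) * (-1/(2*x^2))"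
      using du[OF x, of "s-1"] unfolding ss .
    note L0 = DERIV_cdivide[OF DERIV_minus[OF D1], of "s-1"]
    have eq: "- ((s-1) * ((x+1)/(2*x)) powr (s-2) * (-1/(2*x^2))) / (s-1) = a * ((x+1)/(2*x)) / (2*x^2)"
      unfolding pw using \<open>s - 1 \<noteq> 0\<close> by simp
    have L: "DERIV (\<lambda>x. - (((x+1)/(2*x)) powr (s-1)) / (s-1)) x :> a * ((x+1)/(2*x)) / (2*x^2)"
      using L0 unfolding eq .
    have "DERIV (G1 s) x :> a * ((x+1)/(2*x)) / (2*x^2) - ((x-2)/(2*x^3) * (a * ((x+1)/(2*x))) + ((s-2) * a * (-1/(2*x^2))) * ((1-x)/(2*x^2)))"
      unfolding e by (rule DERIV_diff[OF L P])
    moreover have "a * ((x+1)/(2*x)) / (2*x^2) - ((x-2)/(2*x^3) * (a * ((x+1)/(2*x))) + ((s-2) * a * (-1/(2*x^2))) * ((1-x)/(2*x^2))) = G2 s x"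
      unfolding G2e using x by (simp add: field_simps; algebra)
    ultimately show ?thesis by simp
  qed
qed

definition hh :: "real \<Rightarrow> real \<Rightarrow> real \<Rightarrow> real" where
  "hh s t x = ((x+1)/2) powr (-t-1) * ((x+1)/(2*x)) powr s * ((4-s) + s/x)"

lemma rat2: fixes x d P s :: real assumes "x \<noteq> 0" "d \<noteq> 0"
  shows "P / (d/(2*x))^3 * ((4-s)*x+s) / (4*x^4) = P * ((4-s) + s/x) / (4*(d/2)^3)"
  using assms by (simp add: field_simps power3_eq_cube) algebra

lemma K1: assumes x: "(x::real) > 0" shows "G2 s x = hh s t x * F2 t x"
proof -
  have u: "(x+1)/(2*x) > 0" and y: "(x+1)/2 > 0" using x by auto
  have a: "((x+1)/(2*x)) powr (s-3) = ((x+1)/(2*x)) powr s / ((x+1)/(2*x))^3"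
    using u by (simp add: powr_diff powr_numeral)
  have b: "((x+1)/2) powr (-t-1) * ((x+1)/2) powr (t-2) = 1 / ((x+1)/2)^3"
  proof -
    have "((x+1)/2) powr (-t-1) * ((x+1)/2) powr (t-2) = ((x+1)/2) powr ((-t-1) + (t-2))"
      by (rule powr_add[symmetric])
    also have "(-t-1) + (t-2) = - 3" by simp
    finally have "((x+1)/2) powr (-t-1) * ((x+1)/2) powr (t-2) = ((x+1)/2) powr (- 3)" .
    also have "\<dots> = 1 / ((x+1)/2) powr 3" by (rule powr_minus_divide)
    also have "((x+1)/2) powr 3 = ((x+1)/2)^3" using y by simp
    finally show ?thesis .
  qed
  have "hh s t x * F2 t x = (((x+1)/2) powr (-t-1) * ((x+1)/2) powr (t-2)) * ((x+1)/(2*x)) powr s * ((4-s) + s/x) / 4"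
    by (simp add: hh_def F2_def)
  also have "\<dots> = ((x+1)/(2*x)) powr s * ((4-s) + s/x) / (4 * ((x+1)/2)^3)" unfolding b by simp
  finally show ?thesis unfolding G2_def a using rat2[of x "x+1"] x by simp
qed

lemma K2: assumes x: "(0::real) < x" and xz: "x \<le> z" and s: "0 \<le> s" "s \<le> 4" and t: "t \<ge> -1"
  shows "hh s t z \<le> hh s t x"
proof -
  have z: "z > 0" using x xz by simp
  have f1: "((z+1)/2) powr (-t-1) \<le> ((x+1)/2) powr (-t-1)"
    by (rule powr_mono2') (use t x xz in auto)
  have uu: "(z+1)/(2*z) \<le> (x+1)/(2*x)" using x z xz by (simp add: field_simps)
  have f2: "((z+1)/(2*z)) powr s \<le> ((x+1)/(2*x)) powr s"
    by (rule powr_mono2) (use s z uu in auto)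
  have f3: "(4-s) + s/z \<le> (4-s) + s/x" using s x xz by (simp add: divide_left_mono)
  have n3: "0 \<le> (4-s) + s/z" using s z by simp
  show ?thesis unfolding hh_def
    by (intro mult_mono f1 f2 f3 n3 mult_nonneg_nonneg) auto
qed

lemma hform: assumes x: "(x::real) > 0"
  shows "hh s t x = 1 / x powr (s+1) * ((x+1)/2) powr (s-t-1) * ((4-s)*x+s)"
proof -
  have y: "(x+1)/2 > 0" using x by simp
  have e1: "((x+1)/(2*x)) powr s = ((x+1)/2) powr s / x powr s"
  proof -
    have "((x+1)/2 / x) powr s = ((x+1)/2) powr s / x powr s" by (rule powr_divide)
    then show ?thesis by simp
  qed
  have e2: "((x+1)/2) powr (-t-1) * ((x+1)/2) powr s = ((x+1)/2) powr (s-t-1)"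
  proof -
    have "((x+1)/2) powr (-t-1) * ((x+1)/2) powr s = ((x+1)/2) powr ((-t-1) + s)" by (rule powr_add[symmetric])
    also have "(-t-1) + s = s-t-1" by simp
    finally show ?thesis .
  qed
  have e3: "x powr (s+1) = x powr s * x" using x by (simp add: powr_add)
  have "hh s t x = (((x+1)/2) powr (-t-1) * ((x+1)/2) powr s) / x powr s * ((4-s) + s/x)"
    unfolding hh_def e1 by simp
  also have "\<dots> = ((x+1)/2) powr (s-t-1) / x powr s * ((4-s) + s/x)" unfolding e2 ..
  also have "\<dots> = 1 / x powr (s+1) * ((x+1)/2) powr (s-t-1) * ((4-s)*x+s)"
    unfolding e3 using x by (simp add: field_simps)
  finally show ?thesis .
qed

lemma uq: "(p::real) > 0 \<Longrightarrow> q > 0 \<Longrightarrow> (p/q+1)/(2*(p/q)) = (p+q)/(2*p)"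
  by (simp add: field_simps)
lemma yq: "(p::real) > 0 \<Longrightarrow> q > 0 \<Longrightarrow> (p/q+1)/2 = (p+q)/(2*q)"
  by (simp add: field_simps)

lemma zeta_sum: assumes pos: "\<And>i. i < n \<Longrightarrow> p i > 0 \<and> q i > 0"
  shows "zeta s n q p = (\<Sum>i<n. q i * GG s (p i / q i))"
proof cases
  assume 1: "s = 1"
  have "zeta s n q p = (\<Sum>i<n. (q i - p i) * ln ((p i + q i) / (2 * p i)))"
    unfolding zeta_def using 1 by simp
  also have "\<dots> = (\<Sum>i<n. q i * GG s (p i / q i))"
  proof (intro sum.cong refl)
    fix i assume "i \<in> {..<n}"
    then have pq: "p i > 0" "q i > 0" using pos by auto
    have e: "q i * (1 - p i / q i) = q i - p i" using pq by (simp add: field_simps)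
    have g: "GG s (p i/q i) = (1 - p i/q i) * ln ((p i+q i)/(2*p i))" unfolding GG_def uq[OF pq] using 1 by simp
    show "(q i - p i) * ln ((p i + q i) / (2 * p i)) = q i * GG s (p i / q i)"
      by (simp only: g mult.assoc[symmetric] e)
  qed
  finally show ?thesis .
next
  assume 1: "s \<noteq> 1"
  have "zeta s n q p = (\<Sum>i<n. (q i - p i) * ((p i + q i) / (2 * p i)) powr (s - 1) / (s-1))"
    unfolding zeta_def using 1 by (simp add: sum_divide_distrib)
  also have "\<dots> = (\<Sum>i<n. q i * GG s (p i / q i))"
  proof (intro sum.cong refl)
    fix i assume "i \<in> {..<n}"
    then have pq: "p i > 0" "q i > 0" using pos by auto
    have "q i * (1 - p i / q i) = q i - p i" using pq by (simp add: field_simps)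
    then show "(q i - p i) * ((p i + q i) / (2 * p i)) powr (s - 1) / (s-1) = q i * GG s (p i / q i)"
      unfolding GG_def uq[OF pq] using 1 by (simp add: mult.assoc[symmetric])
  qed
  finally show ?thesis .
qed

lemma Omega_sum: assumes pos: "\<And>i. i < n \<Longrightarrow> p i > 0 \<and> q i > 0" and sq: "(\<Sum>i<n. q i) = 1"
  shows "Omega t n q p = (\<Sum>i<n. q i * FF t (p i / q i))"
proof -
  consider "t = 0" | "t = 1" | "t \<noteq> 0" "t \<noteq> 1" by blast
  then show ?thesis
  proof cases
    case 1
    have "Omega t n q p = (\<Sum>i<n. q i * ln (2 * q i / (p i + q i)))"
      unfolding Omega_def using 1 by simp
    also have "\<dots> = (\<Sum>i<n. q i * FF t (p i / q i))"
    proof (intro sum.cong refl)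
      fix i assume "i \<in> {..<n}"
      then have pq: "p i > 0" "q i > 0" using pos by auto
      have "ln (2 * q i / (p i + q i)) = - ln ((p i + q i) / (2 * q i))"
        using pq by (simp add: ln_div)
      then show "q i * ln (2 * q i / (p i + q i)) = q i * FF t (p i / q i)"
        unfolding FF_def yq[OF pq] using 1 by simp
    qed
    finally show ?thesis .
  next
    case 2
    have "Omega t n q p = (\<Sum>i<n. (p i + q i) / 2 * ln ((p i + q i) / (2 * q i)))"
      unfolding Omega_def using 2 by simp
    also have "\<dots> = (\<Sum>i<n. q i * FF t (p i / q i))"
    proof (intro sum.cong refl)
      fix i assume "i \<in> {..<n}"
      then have pq: "p i > 0" "q i > 0" using pos by auto
      have e: "q i * ((p i + q i) / (2 * q i)) = (p i + q i) / 2" using pq by (simp add: field_simps)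
      have g: "FF t (p i/q i) = ((p i + q i) / (2 * q i)) * ln ((p i + q i) / (2 * q i))" unfolding FF_def yq[OF pq] using 2 by simp
      show "(p i + q i) / 2 * ln ((p i + q i) / (2 * q i)) = q i * FF t (p i / q i)"
        by (simp only: g mult.assoc[symmetric] e)
    qed
    finally show ?thesis .
  next
    case 3
    have "Omega t n q p = ((\<Sum>i<n. q i * ((p i + q i) / (2 * q i)) powr t) - (\<Sum>i<n. q i)) / (t * (t - 1))"
      unfolding Omega_def sq using 3 by simp
    also have "\<dots> = (\<Sum>i<n. (q i * ((p i + q i) / (2 * q i)) powr t - q i) / (t * (t - 1)))"
      by (simp only: sum_divide_distrib[symmetric] sum_subtractf)
    also have "\<dots> = (\<Sum>i<n. q i * FF t (p i / q i))"
    proof (intro sum.cong refl)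
      fix i assume "i \<in> {..<n}"
      then have pq: "p i > 0" "q i > 0" using pos by auto
      show "(q i * ((p i + q i) / (2 * q i)) powr t - q i) / (t * (t - 1)) = q i * FF t (p i / q i)"
        unfolding FF_def yq[OF pq] using 3 by (simp add: right_diff_distrib)
    qed
    finally show ?thesis .
  qed
qed

lemma GG1: "GG s 1 = 0" by (simp add: GG_def)
lemma FF1: "FF t 1 = 0" by (simp add: FF_def)

lemma jensen_part:
  fixes phi :: "real \<Rightarrow> real" and n :: nat
  assumes n: "n \<ge> 2" and pos: "\<And>i. i < n \<Longrightarrow> p i > 0 \<and> q i > 0"
    and sp: "(\<Sum>i<n. p i) = 1" and sq: "(\<Sum>i<n. q i) = 1"
    and xin: "\<And>i. i < n \<Longrightarrow> p i / q i \<in> {r..R}"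
    and cv: "convex_on {r..R} phi"
  shows "phi 1 \<le> (\<Sum>i<n. q i * phi (p i / q i))"
proof -
  have "(\<Sum>i<n. q i *\<^sub>R (p i / q i)) = (\<Sum>i<n. p i)"
    by (intro sum.cong refl) (use pos in fastforce)
  then have e: "(\<Sum>i<n. q i *\<^sub>R (p i / q i)) = 1" using sp by simp
  have "phi (\<Sum>i<n. q i *\<^sub>R (p i / q i)) \<le> (\<Sum>i<n. q i * phi (p i / q i))"
    by (rule convex_on_sum[OF _ _ cv sq]) (use n pos xin in \<open>auto simp: less_imp_le lessThan_empty_iff\<close>)
  then show ?thesis unfolding e .
qed

theorem theorem4p1:
  fixes n :: nat and p q :: "nat \<Rightarrow> real" and r R s t :: real
  assumes "n \<ge> 2"
    and "p \<in> Gamma n" and "q \<in> Gamma n"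
    and "0 < r" and "r \<le> R"
    and "\<And>i. i < n \<Longrightarrow> r \<le> p i / q i \<and> p i / q i \<le> R"
    and "0 \<le> s" and "s \<le> 4" and "t \<ge> -1"
  shows "1 / R powr (s + 1) * ((R + 1) / 2) powr (s - t - 1) * ((4 - s) * R + s) * Omega t n q p
           \<le> zeta s n q p \<and>
         zeta s n q p
           \<le> 1 / r powr (s + 1) * ((r + 1) / 2) powr (s - t - 1) * ((4 - s) * R + s) * Omega t n q p"
proof -
  note n = assms(1) and r = assms(4) and rR = assms(5) and bnd = assms(6)
    and s0 = assms(7) and s4 = assms(8) and t = assms(9)
  have pos: "\<And>i. i < n \<Longrightarrow> p i > 0 \<and> q i > 0" using assms(2,3) by (auto simp: Gamma_def)
  have sp: "(\<Sum>i<n. p i) = 1" and sq: "(\<Sum>i<n. q i) = 1" using assms(2,3) by (auto simp: Gamma_def)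
  have xin: "\<And>i. i < n \<Longrightarrow> p i / q i \<in> {r..R}" using bnd by auto
  have R: "R > 0" using r rR by simp
  define m where "m = 1 / R powr (s + 1) * ((R + 1) / 2) powr (s - t - 1) * ((4 - s) * R + s)"
  define M where "M = 1 / r powr (s + 1) * ((r + 1) / 2) powr (s - t - 1) * ((4 - s) * R + s)"
  have hm: "m \<le> hh s t y" if y: "y \<in> {r..R}" for y
  proof -
    have "m = hh s t R" unfolding m_def using hform[OF R] by simp
    also have "\<dots> \<le> hh s t y" by (rule K2) (use y r s0 s4 t in auto)
    finally show ?thesis .
  qed
  have hM: "hh s t y \<le> M" if y: "y \<in> {r..R}" for y
  proof -
    have "hh s t y \<le> hh s t r" by (rule K2) (use y r s0 s4 t in auto)
    also have "\<dots> = 1 / r powr (s + 1) * ((r + 1) / 2) powr (s - t - 1) * ((4 - s) * r + s)"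
      using hform[OF r] by simp
    also have "\<dots> \<le> M" unfolding M_def
      by (intro mult_left_mono) (use r rR s4 in \<open>auto intro: mult_left_mono\<close>)
    finally show ?thesis .
  qed
  have F2pos: "F2 t y > 0" if "y > 0" for y using that by (simp add: F2_def)
  have cv1: "convex_on {r..R} (\<lambda>y. GG s y - m * FF t y)"
  proof (rule f''_ge0_imp_convex[where f' = "\<lambda>y. G1 s y - m * F1 t y" and f'' = "\<lambda>y. G2 s y - m * F2 t y"])
    show "convex {r..R}" by simp
  next
    fix y assume y: "y \<in> {r..R}"
    then have y0: "y > 0" using r by auto
    show "DERIV (\<lambda>y. GG s y - m * FF t y) y :> G1 s y - m * F1 t y"
      by (intro DERIV_diff DERIV_cmult GG_deriv FF_deriv y0)
    show "DERIV (\<lambda>y. G1 s y - m * F1 t y) y :> G2 s y - m * F2 t y"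
      by (intro DERIV_diff DERIV_cmult G1_deriv F1_deriv y0)
    have "G2 s y - m * F2 t y = (hh s t y - m) * F2 t y" using K1[OF y0] by (simp add: algebra_simps)
    then show "0 \<le> G2 s y - m * F2 t y" using hm[OF y] F2pos[OF y0] by simp
  qed
  have cv2: "convex_on {r..R} (\<lambda>y. M * FF t y - GG s y)"
  proof (rule f''_ge0_imp_convex[where f' = "\<lambda>y. M * F1 t y - G1 s y" and f'' = "\<lambda>y. M * F2 t y - G2 s y"])
    show "convex {r..R}" by simp
  next
    fix y assume y: "y \<in> {r..R}"
    then have y0: "y > 0" using r by auto
    show "DERIV (\<lambda>y. M * FF t y - GG s y) y :> M * F1 t y - G1 s y"
      by (intro DERIV_diff DERIV_cmult GG_deriv FF_deriv y0)
    show "DERIV (\<lambda>y. M * F1 t y - G1 s y) y :> M * F2 t y - G2 s y"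
      by (intro DERIV_diff DERIV_cmult G1_deriv F1_deriv y0)
    have "M * F2 t y - G2 s y = (M - hh s t y) * F2 t y" using K1[OF y0] by (simp add: algebra_simps)
    then show "0 \<le> M * F2 t y - G2 s y" using hM[OF y] F2pos[OF y0] by simp
  qed
  have Z: "zeta s n q p = (\<Sum>i<n. q i * GG s (p i / q i))" by (rule zeta_sum) (use pos in auto)
  have O: "Omega t n q p = (\<Sum>i<n. q i * FF t (p i / q i))" by (rule Omega_sum) (use pos sq in auto)
  note J1 = jensen_part[OF n pos sp sq xin cv1]
  note J2 = jensen_part[OF n pos sp sq xin cv2]
  have e1: "(\<Sum>i<n. q i * (GG s (p i / q i) - m * FF t (p i / q i))) = zeta s n q p - m * Omega t n q p"
    unfolding Z O by (simp add: algebra_simps sum_subtractf sum_distrib_left)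
  have e2: "(\<Sum>i<n. q i * (M * FF t (p i / q i) - GG s (p i / q i))) = M * Omega t n q p - zeta s n q p"
    unfolding Z O by (simp add: algebra_simps sum_subtractf sum_distrib_left)
  have "0 \<le> zeta s n q p - m * Omega t n q p" using J1 unfolding e1 by (simp add: GG1 FF1)
  moreover have "0 \<le> M * Omega t n q p - zeta s n q p" using J2 unfolding e2 by (simp add: GG1 FF1)
  ultimately show ?thesis unfolding m_def M_def by simp
qed

end
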